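(* Let $G$ be a graph with at least one vertex and $f:V(G)\to\{1,2,3,\dots\}$. Then $\gamma_{gr}^{\times2}(G_f)\le2\gamma_{gr}(G)$. Moreover, there exists a GDDS $S=(v_1,\dots,v_{2k})$ of $G_f$ such that for each odd $i\in\{1,3,\dots,2k-1\}$, $v_i$ and $v_{i+1}$ are true twin vertices in $G_f$.
   Context: Graphs are finite, simple, undirected; $N[v]$ closed neighborhood; $x,y$ are true twins if $N[x]=N[y]$. $G_f$ is the graph with vertex set $\bigcup_{v\in V(G)}\{v^1,\dots,v^{f(v)+1}\}$ in which $v^iu^j$ is an edge iff either $v=u$ and $i\neq j$, or $vu\in E(G)$. A sequence $(v_1,\dots,v_k)$ of distinct vertices is legal if $N[v_i]\setminus\bigcup_{j<i}N[v_j]\neq\emptyset$ for $i\ge2$, and a dominating sequence if moreover its vertex set is dominating; $\gamma_{gr}(G)$ is the maximum length of a dominating sequence. A sequence of distinct vertices is a double neighborhood sequence if for each $i$ some $w\in N[v_i]$ satisfies $|\{j<i:w\in N[v_j]\}|\le1$, and a double dominating sequence (DDS) if moreover every vertex $w$ satisfies $|N[w]\cap\{v_1,\dots,v_k\}|\ge2$; a GDDS is a DDS of maximum length, this length being $\gamma_{gr}^{\times2}$. *)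

theory Defs
  imports Main
begin

text \<open>A finite simple graph is given by a vertex set V and a symmetric,
irreflexive adjacency relation E (only adjacencies inside V matter).\<close>

definition graph :: "'a set \<Rightarrow> ('a \<Rightarrow> 'a \<Rightarrow> bool) \<Rightarrow> bool" where
  "graph V E \<longleftrightarrow> finite V \<and> (\<forall>x y. E x y \<longrightarrow> E y x) \<and> (\<forall>x. \<not> E x x)"

definition cnbhd :: "'a set \<Rightarrow> ('a \<Rightarrow> 'a \<Rightarrow> bool) \<Rightarrow> 'a \<Rightarrow> 'a set" where
  "cnbhd V E v = {u \<in> V. E v u} \<union> {v}"

definition true_twins :: "'a set \<Rightarrow> ('a \<Rightarrow> 'a \<Rightarrow> bool) \<Rightarrow> 'a \<Rightarrow> 'a \<Rightarrow> bool" where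
  "true_twins V E x y \<longleftrightarrow> cnbhd V E x = cnbhd V E y"

text \<open>The graph G_f: vertex v^i is encoded as the pair (v, i), 1 <= i <= f v + 1.\<close>

definition Gf_verts :: "'a set \<Rightarrow> ('a \<Rightarrow> nat) \<Rightarrow> ('a \<times> nat) set" where
  "Gf_verts V f = {(v, i). v \<in> V \<and> 1 \<le> i \<and> i \<le> f v + 1}"

definition Gf_adj :: "('a \<Rightarrow> 'a \<Rightarrow> bool) \<Rightarrow> ('a \<times> nat) \<Rightarrow> ('a \<times> nat) \<Rightarrow> bool" where
  "Gf_adj E p q \<longleftrightarrow> (fst p = fst q \<and> snd p \<noteq> snd q) \<or> E (fst p) (fst q)"

text \<open>Sequences are lists; positions are 0-based.\<close>

definition legal_seq :: "'a set \<Rightarrow> ('a \<Rightarrow> 'a \<Rightarrow> bool) \<Rightarrow> 'a list \<Rightarrow> bool" where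
  "legal_seq V E s \<longleftrightarrow> distinct s \<and> set s \<subseteq> V \<and>
     (\<forall>i. 1 \<le> i \<and> i < length s \<longrightarrow>
        cnbhd V E (s ! i) - (\<Union>j<i. cnbhd V E (s ! j)) \<noteq> {})"

definition dominating_seq :: "'a set \<Rightarrow> ('a \<Rightarrow> 'a \<Rightarrow> bool) \<Rightarrow> 'a list \<Rightarrow> bool" where
  "dominating_seq V E s \<longleftrightarrow> legal_seq V E s \<and> (\<Union>v\<in>set s. cnbhd V E v) = V"

definition grundy_dom :: "'a set \<Rightarrow> ('a \<Rightarrow> 'a \<Rightarrow> bool) \<Rightarrow> nat" where
  "grundy_dom V E = Max {length s | s. dominating_seq V E s}"

definition double_nbhd_seq :: "'a set \<Rightarrow> ('a \<Rightarrow> 'a \<Rightarrow> bool) \<Rightarrow> 'a list \<Rightarrow> bool" where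
  "double_nbhd_seq V E s \<longleftrightarrow> distinct s \<and> set s \<subseteq> V \<and>
     (\<forall>i < length s. \<exists>w \<in> cnbhd V E (s ! i).
        card {j. j < i \<and> w \<in> cnbhd V E (s ! j)} \<le> 1)"

definition double_dom_seq :: "'a set \<Rightarrow> ('a \<Rightarrow> 'a \<Rightarrow> bool) \<Rightarrow> 'a list \<Rightarrow> bool" where
  "double_dom_seq V E s \<longleftrightarrow> double_nbhd_seq V E s \<and>
     (\<forall>w \<in> V. card (cnbhd V E w \<inter> set s) \<ge> 2)"

definition grundy_double_dom :: "'a set \<Rightarrow> ('a \<Rightarrow> 'a \<Rightarrow> bool) \<Rightarrow> nat" where
  "grundy_double_dom V E = Max {length s | s. double_dom_seq V E s}"

definition GDDS :: "'a set \<Rightarrow> ('a \<Rightarrow> 'a \<Rightarrow> bool) \<Rightarrow> 'a list \<Rightarrow> bool" where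
  "GDDS V E s \<longleftrightarrow> double_dom_seq V E s \<and> length s = grundy_double_dom V E"

end

theory Submission
  imports Defs
begin

lemma legal_snoc:
  assumes "legal_seq V E xs" "x \<notin> set xs" "x \<in> V"
    "xs \<noteq> [] \<Longrightarrow> cnbhd V E x - (\<Union>(cnbhd V E ` set xs)) \<noteq> {}"
  shows "legal_seq V E (xs @ [x])"
  unfolding legal_seq_def
proof (intro conjI allI impI)
  show "distinct (xs @ [x])" using assms(1,2) by (simp add: legal_seq_def)
  show "set (xs @ [x]) \<subseteq> V" using assms(1,3) by (simp add: legal_seq_def)
  fix i assume i: "1 \<le> i \<and> i < length (xs @ [x])"
  show "cnbhd V E ((xs @ [x]) ! i) - (\<Union>j<i. cnbhd V E ((xs @ [x]) ! j)) \<noteq> {}"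
  proof (cases "i < length xs")
    case True
    have "(\<Union>j<i. cnbhd V E ((xs @ [x]) ! j)) = (\<Union>j<i. cnbhd V E (xs ! j))"
      using True by (intro SUP_cong) (simp_all add: nth_append)
    moreover have "(xs @ [x]) ! i = xs ! i" using True by (simp add: nth_append)
    moreover have "cnbhd V E (xs ! i) - (\<Union>j<i. cnbhd V E (xs ! j)) \<noteq> {}"
    proof -
      have "\<forall>i. 1 \<le> i \<and> i < length xs \<longrightarrow> cnbhd V E (xs ! i) - (\<Union>j<i. cnbhd V E (xs ! j)) \<noteq> {}"
        using assms(1) by (simp add: legal_seq_def)
      then show ?thesis using True i by blast
    qed
    ultimately show ?thesis by simp
  next
    case False
    then have ii: "i = length xs" using i by simp
    have "(\<Union>j<i. cnbhd V E ((xs @ [x]) ! j)) = \<Union>(cnbhd V E ` set xs)"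
    proof -
      have "(\<Union>j<i. cnbhd V E ((xs @ [x]) ! j)) = (\<Union>j<length xs. cnbhd V E (xs ! j))"
        using ii by (intro SUP_cong) (simp_all add: nth_append)
      also have "\<dots> = \<Union>(cnbhd V E ` (\<lambda>j. xs ! j) ` {..<length xs})" by (simp add: image_image)
      also have "(\<lambda>j. xs ! j) ` {..<length xs} = set xs" by (auto simp: in_set_conv_nth)
      finally show ?thesis .
    qed
    moreover have "xs \<noteq> []" using i ii by auto
    moreover have "(xs @ [x]) ! i = x" using ii by (simp add: nth_append)
    ultimately show ?thesis using assms(4) by metis
  qed
qed

lemma cnbhd_sub: "v \<in> V \<Longrightarrow> cnbhd V E v \<subseteq> V"
  by (auto simp: cnbhd_def)

lemma cnbhd_self: "v \<in> cnbhd V E v"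
  by (auto simp: cnbhd_def)

lemma legal_len_bound:
  assumes "finite V" "legal_seq V E s"
  shows "\<exists>s'. dominating_seq V E s' \<and> length s \<le> length s'"
  using assms(2)
proof (induction "card (V - \<Union>(cnbhd V E ` set s))" arbitrary: s rule: less_induct)
  case less
  have sV: "set s \<subseteq> V" using less.prems unfolding legal_seq_def by blast
  show ?case
  proof (cases "V - \<Union>(cnbhd V E ` set s) = {}")
    case True
    have "\<Union>(cnbhd V E ` set s) \<subseteq> V" using sV by (auto simp: cnbhd_def)
    then have "\<Union>(cnbhd V E ` set s) = V" using True by blast
    then show ?thesis using less.prems by (auto simp: dominating_seq_def)
  next
    case False
    then obtain w where w: "w \<in> V" "w \<notin> \<Union>(cnbhd V E ` set s)" by blast
    have ws: "w \<notin> set s"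
    proof
      assume "w \<in> set s"
      then have "w \<in> \<Union>(cnbhd V E ` set s)" using cnbhd_self[of w V E] by blast
      then show False using w(2) by blast
    qed
    have leg: "legal_seq V E (s @ [w])"
    proof (rule legal_snoc[OF less.prems ws w(1)])
      show "cnbhd V E w - \<Union>(cnbhd V E ` set s) \<noteq> {}" using w(2) cnbhd_self[of w V E] by blast
    qed
    have "V - \<Union>(cnbhd V E ` set (s @ [w])) \<subset> V - \<Union>(cnbhd V E ` set s)"
    proof -
      have "w \<in> V - \<Union>(cnbhd V E ` set s)" using w by blast
      moreover have "w \<notin> V - \<Union>(cnbhd V E ` set (s @ [w]))" using cnbhd_self[of w V E] by auto
      moreover have "V - \<Union>(cnbhd V E ` set (s @ [w])) \<subseteq> V - \<Union>(cnbhd V E ` set s)" by auto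
      ultimately show ?thesis by blast
    qed
    then have "card (V - \<Union>(cnbhd V E ` set (s @ [w]))) < card (V - \<Union>(cnbhd V E ` set s))"
      using assms(1) by (intro psubset_card_mono) auto
    from less.hyps[OF this leg] obtain s' where "dominating_seq V E s'" "length (s @ [w]) \<le> length s'" by blast
    then show ?thesis by auto
  qed
qed

lemma dom_lengths_bounded:
  assumes "finite V"
  shows "{length s | s. dominating_seq V E s} \<subseteq> {..card V}"
proof
  fix n assume "n \<in> {length s | s. dominating_seq V E s}"
  then obtain s where s: "n = length s" "dominating_seq V E s" by blast
  then have "distinct s" "set s \<subseteq> V" by (auto simp: dominating_seq_def legal_seq_def)
  then have "length s \<le> card V" using assms card_mono[of V "set s"] distinct_card[of s] by simp
  then show "n \<in> {..card V}" using s by simp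
qed

lemma legal_le_grundy:
  assumes "finite V" "legal_seq V E s"
  shows "length s \<le> grundy_dom V E"
proof -
  obtain s' where s': "dominating_seq V E s'" "length s \<le> length s'"
    using legal_len_bound[OF assms] by blast
  have "finite {length s | s. dominating_seq V E s}"
    using dom_lengths_bounded[OF assms(1)] finite_subset by blast
  then have "length s' \<le> grundy_dom V E" unfolding grundy_dom_def
    using s'(1) by (intro Max_ge) auto
  then show ?thesis using s'(2) by simp
qed

lemma grundy_attained:
  assumes "finite V"
  shows "\<exists>D. dominating_seq V E D \<and> length D = grundy_dom V E"
proof -
  have "legal_seq V E []" by (simp add: legal_seq_def)
  then obtain s' where "dominating_seq V E s'" using legal_len_bound[OF assms] by blast
  moreover have "finite {length s | s. dominating_seq V E s}"
    using dom_lengths_bounded[OF assms(1)] finite_subset by blast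
  ultimately have "grundy_dom V E \<in> {length s | s. dominating_seq V E s}"
    unfolding grundy_dom_def by (intro Max_in) auto
  then show ?thesis by auto
qed


definition newp :: "'a set \<Rightarrow> ('a \<Rightarrow> 'a \<Rightarrow> bool) \<Rightarrow> 'a list \<Rightarrow> nat \<Rightarrow> bool" where
  "newp V E t n \<longleftrightarrow> (\<exists>w\<in>cnbhd V E (t!n). \<forall>j<n. w \<notin> cnbhd V E (t!j))"

fun newL :: "'a set \<Rightarrow> ('a \<Rightarrow> 'a \<Rightarrow> bool) \<Rightarrow> 'a list \<Rightarrow> nat \<Rightarrow> 'a list" where
  "newL V E t 0 = []"
| "newL V E t (Suc n) = (if newp V E t n then newL V E t n @ [t!n] else newL V E t n)"

fun secL :: "'a set \<Rightarrow> ('a \<Rightarrow> 'a \<Rightarrow> bool) \<Rightarrow> 'a list \<Rightarrow> nat \<Rightarrow> 'a list" where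
  "secL V E t 0 = []"
| "secL V E t (Suc n) = (if newp V E t n then secL V E t n else secL V E t n @ [t!n])"

lemma len_new_sec: "length (newL V E t n) + length (secL V E t n) = n"
  by (induction n) auto

lemma set_newL: "set (newL V E t n) = {t!j | j. j < n \<and> newp V E t j}"
  by (induction n) (auto simp: less_Suc_eq)

lemma set_secL: "set (secL V E t n) = {t!j | j. j < n \<and> \<not> newp V E t j}"
  by (induction n) (auto simp: less_Suc_eq)

lemma first_dom:
  assumes "w \<in> cnbhd V E (t!j)"
  shows "\<exists>j0\<le>j. newp V E t j0 \<and> w \<in> cnbhd V E (t!j0)"
proof -
  define j0 where "j0 = (LEAST k. w \<in> cnbhd V E (t!k))"
  have h: "w \<in> cnbhd V E (t!j0)" unfolding j0_def by (rule LeastI[of _ j]) (rule assms)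
  have le: "j0 \<le> j" unfolding j0_def by (rule Least_le) (rule assms)
  have "\<forall>k<j0. w \<notin> cnbhd V E (t!k)" unfolding j0_def using not_less_Least by blast
  then have "newp V E t j0" unfolding newp_def using h by blast
  then show ?thesis using h le by blast
qed

lemma dom_newL: "\<Union>(cnbhd V E ` set (newL V E t n)) = (\<Union>j<n. cnbhd V E (t!j))"
proof
  show "\<Union>(cnbhd V E ` set (newL V E t n)) \<subseteq> (\<Union>j<n. cnbhd V E (t!j))"
    unfolding set_newL by auto
  show "(\<Union>j<n. cnbhd V E (t!j)) \<subseteq> \<Union>(cnbhd V E ` set (newL V E t n))"
  proof
    fix w assume "w \<in> (\<Union>j<n. cnbhd V E (t!j))"
    then obtain j where j: "j < n" "w \<in> cnbhd V E (t!j)" by blast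
    from first_dom[OF j(2)] obtain j0 where "j0 \<le> j" "newp V E t j0" "w \<in> cnbhd V E (t!j0)" by blast
    moreover then have "t!j0 \<in> set (newL V E t n)" unfolding set_newL using j(1) by auto
    ultimately show "w \<in> \<Union>(cnbhd V E ` set (newL V E t n))" by blast
  qed
qed

lemma legal_newL:
  assumes "set t \<subseteq> V" "n \<le> length t"
  shows "legal_seq V E (newL V E t n)"
  using assms(2)
proof (induction n)
  case 0
  then show ?case by (simp add: legal_seq_def)
next
  case (Suc n)
  then have IH: "legal_seq V E (newL V E t n)" by simp
  show ?case
  proof (cases "newp V E t n")
    case False
    then show ?thesis using IH by simp
  next
    case True
    then obtain w where w: "w \<in> cnbhd V E (t!n)" "\<forall>j<n. w \<notin> cnbhd V E (t!j)"
      unfolding newp_def by blast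
    have wn: "w \<notin> \<Union>(cnbhd V E ` set (newL V E t n))" unfolding dom_newL using w(2) by blast
    have tn: "t!n \<in> V" using assms(1) Suc.prems by (simp add: subset_iff)
    have nin: "t!n \<notin> set (newL V E t n)"
    proof
      assume "t!n \<in> set (newL V E t n)"
      then have "cnbhd V E (t!n) \<subseteq> \<Union>(cnbhd V E ` set (newL V E t n))" by blast
      then show False using w(1) wn by blast
    qed
    have "legal_seq V E (newL V E t n @ [t!n])"
    proof (rule legal_snoc[OF IH nin tn])
      show "cnbhd V E (t ! n) - \<Union> (cnbhd V E ` set (newL V E t n)) \<noteq> {}" using w(1) wn by blast
    qed
    then show ?thesis using True by simp
  qed
qed

lemma legal_secL:
  assumes "set t \<subseteq> V" "n \<le> length t"
    and wit: "\<forall>i<length t. \<exists>w\<in>cnbhd V E (t!i). card {j. j < i \<and> w \<in> cnbhd V E (t!j)} \<le> 1"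
  shows "legal_seq V E (secL V E t n)"
  using assms(2)
proof (induction n)
  case 0
  then show ?case by (simp add: legal_seq_def)
next
  case (Suc n)
  then have IH: "legal_seq V E (secL V E t n)" by simp
  show ?case
  proof (cases "newp V E t n")
    case True
    then show ?thesis using IH by simp
  next
    case False
    have nl: "n < length t" using Suc.prems by simp
    then obtain w where w: "w \<in> cnbhd V E (t!n)" "card {j. j < n \<and> w \<in> cnbhd V E (t!j)} \<le> 1"
      using wit by blast
    have key: "\<not> (j < n \<and> \<not> newp V E t j \<and> w \<in> cnbhd V E (t!j))" for j
    proof
      assume a: "j < n \<and> \<not> newp V E t j \<and> w \<in> cnbhd V E (t!j)"
      from first_dom[of w V E t j] a obtain j0 where j0: "j0 \<le> j" "newp V E t j0" "w \<in> cnbhd V E (t!j0)"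
        by blast
      have "j0 \<noteq> j" using j0(2) a by blast
      then have "card {j0, j} = 2" by simp
      moreover have "{j0, j} \<subseteq> {j. j < n \<and> w \<in> cnbhd V E (t!j)}" using a j0 by auto
      moreover have "finite {j. j < n \<and> w \<in> cnbhd V E (t!j)}" by simp
      ultimately have "2 \<le> card {j. j < n \<and> w \<in> cnbhd V E (t!j)}" by (metis card_mono)
      then show False using w(2) by simp
    qed
    have wn: "w \<notin> \<Union>(cnbhd V E ` set (secL V E t n))"
    proof
      assume "w \<in> \<Union>(cnbhd V E ` set (secL V E t n))"
      then obtain j where "j < n" "\<not> newp V E t j" "w \<in> cnbhd V E (t!j)"
        unfolding set_secL by blast
      then show False using key by blast
    qed
    have tn: "t!n \<in> V" using assms(1) nl by (simp add: subset_iff)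
    have nin: "t!n \<notin> set (secL V E t n)"
    proof
      assume "t!n \<in> set (secL V E t n)"
      then obtain j where "j < n" "\<not> newp V E t j" "t!n = t!j"
        unfolding set_secL by blast
      then show False using key[of j] w(1) by simp
    qed
    have "legal_seq V E (secL V E t n @ [t!n])"
    proof (rule legal_snoc[OF IH nin tn])
      show "cnbhd V E (t ! n) - \<Union> (cnbhd V E ` set (secL V E t n)) \<noteq> {}" using w(1) wn by blast
    qed
    then show ?thesis using False by simp
  qed
qed

lemma wit_bound:
  assumes "finite V" "set t \<subseteq> V"
    and wit: "\<forall>i<length t. \<exists>w\<in>cnbhd V E (t!i). card {j. j < i \<and> w \<in> cnbhd V E (t!j)} \<le> 1"
  shows "length t \<le> 2 * grundy_dom V E"
proof -
  have "length (newL V E t (length t)) \<le> grundy_dom V E"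
    using legal_le_grundy[OF assms(1) legal_newL[OF assms(2)]] by simp
  moreover have "length (secL V E t (length t)) \<le> grundy_dom V E"
    using legal_le_grundy[OF assms(1) legal_secL[OF assms(2) _ wit]] by simp
  ultimately show ?thesis using len_new_sec[of V E t "length t"] by linarith
qed


lemma Gf_mem: "(v, i) \<in> Gf_verts V f \<longleftrightarrow> v \<in> V \<and> 1 \<le> i \<and> i \<le> f v + 1"
  by (simp add: Gf_verts_def)

lemma NF:
  assumes "p \<in> Gf_verts V f"
  shows "cnbhd (Gf_verts V f) (Gf_adj E) p = {q \<in> Gf_verts V f. fst q \<in> cnbhd V E (fst p)}"
proof (intro set_eqI iffI)
  fix q assume "q \<in> cnbhd (Gf_verts V f) (Gf_adj E) p"
  then have "q = p \<or> (q \<in> Gf_verts V f \<and> Gf_adj E p q)" by (auto simp: cnbhd_def)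
  then show "q \<in> {q \<in> Gf_verts V f. fst q \<in> cnbhd V E (fst p)}"
  proof
    assume "q = p" then show ?thesis using assms by (simp add: cnbhd_def)
  next
    assume h: "q \<in> Gf_verts V f \<and> Gf_adj E p q"
    then have "fst q \<in> V" by (cases q) (simp add: Gf_verts_def)
    then show ?thesis using h by (auto simp: cnbhd_def Gf_adj_def)
  qed
next
  fix q assume q: "q \<in> {q \<in> Gf_verts V f. fst q \<in> cnbhd V E (fst p)}"
  show "q \<in> cnbhd (Gf_verts V f) (Gf_adj E) p"
  proof (cases "q = p")
    case True then show ?thesis by (simp add: cnbhd_def)
  next
    case False
    have "Gf_adj E p q"
    proof (cases "fst q = fst p")
      case True
      then have "snd p \<noteq> snd q" using False by (metis prod.collapse)
      then show ?thesis using True by (simp add: Gf_adj_def)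
    next
      case False
      then show ?thesis using q by (auto simp: cnbhd_def Gf_adj_def)
    qed
    then show ?thesis using q by (simp add: cnbhd_def)
  qed
qed

lemma cnbhd_sym:
  assumes "graph V E" "u \<in> V" "v \<in> V"
  shows "u \<in> cnbhd V E v \<longleftrightarrow> v \<in> cnbhd V E u"
  using assms by (auto simp: cnbhd_def graph_def)

lemma DDS_bound:
  assumes g: "graph V E" and S: "double_dom_seq (Gf_verts V f) (Gf_adj E) S"
  shows "length S \<le> 2 * grundy_dom V E"
proof -
  let ?W = "Gf_verts V f" and ?F = "Gf_adj E"
  define t where "t = map fst S"
  have SW: "set S \<subseteq> ?W" and dn: "double_nbhd_seq ?W ?F S"
    using S by (auto simp: double_dom_seq_def double_nbhd_seq_def)
  have tV: "set t \<subseteq> V"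
  proof
    fix v assume "v \<in> set t"
    then obtain p where "p \<in> set S" "v = fst p" unfolding t_def by auto
    then show "v \<in> V" using SW by (cases p) (auto simp: Gf_verts_def)
  qed
  have Si: "S!i \<in> ?W" if "i < length S" for i using SW that nth_mem by blast
  have wit: "\<forall>i<length t. \<exists>w\<in>cnbhd V E (t!i). card {j. j < i \<and> w \<in> cnbhd V E (t!j)} \<le> 1"
  proof (intro allI impI)
    fix i assume "i < length t"
    then have i: "i < length S" unfolding t_def by simp
    from dn i obtain w where w: "w \<in> cnbhd ?W ?F (S!i)"
        "card {j. j < i \<and> w \<in> cnbhd ?W ?F (S!j)} \<le> 1"
      unfolding double_nbhd_seq_def by blast
    have wW: "w \<in> ?W" and fw: "fst w \<in> cnbhd V E (t!i)"
      using w(1) NF[OF Si[OF i]] i by (auto simp: t_def)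
    have "{j. j < i \<and> w \<in> cnbhd ?W ?F (S!j)} = {j. j < i \<and> fst w \<in> cnbhd V E (t!j)}"
    proof (intro set_eqI iffI)
      fix j assume "j \<in> {j. j < i \<and> w \<in> cnbhd ?W ?F (S!j)}"
      then show "j \<in> {j. j < i \<and> fst w \<in> cnbhd V E (t!j)}"
        using NF[OF Si, of j] i by (auto simp: t_def)
    next
      fix j assume "j \<in> {j. j < i \<and> fst w \<in> cnbhd V E (t!j)}"
      then show "j \<in> {j. j < i \<and> w \<in> cnbhd ?W ?F (S!j)}"
        using NF[OF Si, of j] i wW by (auto simp: t_def)
    qed
    then show "\<exists>w\<in>cnbhd V E (t!i). card {j. j < i \<and> w \<in> cnbhd V E (t!j)} \<le> 1"
      using fw w(2) by auto
  qed
  have "finite V" using g by (simp add: graph_def)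
  from wit_bound[OF this tV wit] show ?thesis by (simp add: t_def)
qed


lemma doubled:
  assumes g: "graph V E" and fpos: "\<forall>v \<in> V. f v \<ge> 1" and D: "dominating_seq V E D"
  defines "S \<equiv> map (\<lambda>i. (D!(i div 2), i mod 2 + 1)) [0..<2 * length D]"
  shows "double_dom_seq (Gf_verts V f) (Gf_adj E) S \<and> length S = 2 * length D \<and>
     (\<forall>i < length D. true_twins (Gf_verts V f) (Gf_adj E) (S ! (2 * i)) (S ! (2 * i + 1)))"
proof -
  let ?W = "Gf_verts V f" and ?F = "Gf_adj E"
  let ?n = "length D"
  have lenS: "length S = 2 * ?n" by (simp add: S_def)
  have Snth: "S!i = (D!(i div 2), i mod 2 + 1)" if "i < 2 * ?n" for i
    using that by (simp add: S_def)
  have leg: "legal_seq V E D" and domD: "(\<Union>v\<in>set D. cnbhd V E v) = V"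
    using D by (auto simp: dominating_seq_def)
  have distD: "distinct D" and DV: "set D \<subseteq> V" using leg by (auto simp: legal_seq_def)
  have Dk: "D!k \<in> V" if "k < ?n" for k using DV that nth_mem by blast
  have SW: "S!i \<in> ?W" if "i < 2 * ?n" for i
  proof -
    have "i div 2 < ?n" using that by simp
    then have "D!(i div 2) \<in> V" by (rule Dk)
    moreover have "i mod 2 + 1 \<le> 2" by simp
    ultimately show ?thesis using Snth[OF that] fpos by (auto simp: Gf_verts_def)
  qed
  have setS: "set S \<subseteq> ?W"
  proof
    fix p assume "p \<in> set S"
    then obtain i where "i < length S" "p = S!i" by (auto simp: in_set_conv_nth)
    then show "p \<in> ?W" using SW lenS by simp
  qed
  have distS: "distinct S"
  proof -
    have "inj_on (\<lambda>i. (D!(i div 2), i mod 2 + 1)) {0..<2 * ?n}"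
    proof (rule inj_onI)
      fix i j assume i: "i \<in> {0..<2 * ?n}" and j: "j \<in> {0..<2 * ?n}"
        and eq: "(D!(i div 2), i mod 2 + 1) = (D!(j div 2), j mod 2 + 1)"
      have "i div 2 < ?n" "j div 2 < ?n" using i j by auto
      then have "i div 2 = j div 2" using eq distD by (simp add: nth_eq_iff_index_eq)
      moreover have "i mod 2 = j mod 2" using eq by simp
      ultimately show "i = j" by (metis div_mult_mod_eq)
    qed
    then show ?thesis by (simp add: S_def distinct_map)
  qed
  have dns: "double_nbhd_seq ?W ?F S"
    unfolding double_nbhd_seq_def
  proof (intro conjI allI impI)
    show "distinct S" by (rule distS)
    show "set S \<subseteq> ?W" by (rule setS)
    fix i assume "i < length S"
    then have i: "i < 2 * ?n" using lenS by simp
    define k where "k = i div 2"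
    have k: "k < ?n" using i by (simp add: k_def)
    obtain w where w: "w \<in> cnbhd V E (D!k)" "\<forall>j<k. w \<notin> cnbhd V E (D!j)"
    proof (cases "k = 0")
      case True
      then show ?thesis using that[of "D!k"] cnbhd_self[of "D!k" V E] by simp
    next
      case False
      then have "cnbhd V E (D!k) - (\<Union>j<k. cnbhd V E (D!j)) \<noteq> {}"
        using leg k unfolding legal_seq_def by simp
      then show ?thesis using that by blast
    qed
    have wV: "w \<in> V" using w(1) cnbhd_sub[OF Dk[OF k]] by blast
    have w1: "(w, 1) \<in> ?W" using wV fpos by (simp add: Gf_verts_def)
    have "(w, 1) \<in> cnbhd ?W ?F (S!i)"
      using NF[OF SW[OF i]] Snth[OF i] w1 w(1) by (simp add: k_def)
    moreover have "card {j. j < i \<and> (w, 1) \<in> cnbhd ?W ?F (S!j)} \<le> 1"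
    proof -
      have "{j. j < i \<and> (w, 1) \<in> cnbhd ?W ?F (S!j)} \<subseteq> {2 * k}"
      proof
        fix j assume j: "j \<in> {j. j < i \<and> (w, 1) \<in> cnbhd ?W ?F (S!j)}"
        then have ji: "j < i" and jn: "j < 2 * ?n" using i by auto
        have "w \<in> cnbhd V E (D!(j div 2))"
          using j NF[OF SW[OF jn]] Snth[OF jn] by simp
        then have "\<not> j div 2 < k" using w(2) by blast
        moreover have "j div 2 \<le> k" using ji by (simp add: k_def div_le_mono)
        ultimately have "j div 2 = k" by simp
        then show "j \<in> {2 * k}" using ji by (simp add: k_def)
      qed
      then have "card {j. j < i \<and> (w, 1) \<in> cnbhd ?W ?F (S!j)} \<le> card {2 * k}"
        by (intro card_mono) auto
      then show ?thesis by simp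
    qed
    ultimately show "\<exists>w\<in>cnbhd ?W ?F (S!i). card {j. j < i \<and> w \<in> cnbhd ?W ?F (S!j)} \<le> 1"
      by blast
  qed
  have dd: "\<forall>q \<in> ?W. card (cnbhd ?W ?F q \<inter> set S) \<ge> 2"
  proof
    fix q assume q: "q \<in> ?W"
    then have qV: "fst q \<in> V" by (cases q) (simp add: Gf_verts_def)
    then obtain v where v: "v \<in> set D" "fst q \<in> cnbhd V E v"
      using domD by blast
    then obtain k where k: "k < ?n" "fst q \<in> cnbhd V E (D!k)"
      by (metis in_set_conv_nth)
    have kq: "D!k \<in> cnbhd V E (fst q)" using cnbhd_sym[OF g qV Dk[OF k(1)]] k(2) by simp
    have a: "2 * k < 2 * ?n" "2 * k + 1 < 2 * ?n" using k(1) by auto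
    have m1: "S!(2*k) \<in> set S" "S!(2*k+1) \<in> set S" using a lenS by (simp_all add: nth_mem)
    have "S!(2*k) \<in> cnbhd ?W ?F q \<inter> set S"
      using NF[OF q] SW[OF a(1)] Snth[OF a(1)] kq m1 by simp
    moreover have "S!(2*k+1) \<in> cnbhd ?W ?F q \<inter> set S"
      using NF[OF q] SW[OF a(2)] Snth[OF a(2)] kq m1 by simp
    moreover have "S!(2*k) \<noteq> S!(2*k+1)" using Snth[OF a(1)] Snth[OF a(2)] by simp
    ultimately have "{S!(2*k), S!(2*k+1)} \<subseteq> cnbhd ?W ?F q \<inter> set S" "card {S!(2*k), S!(2*k+1)} = 2"
      by auto
    then show "card (cnbhd ?W ?F q \<inter> set S) \<ge> 2"
    proof -
      have "card {S!(2*k), S!(2*k+1)} \<le> card (cnbhd ?W ?F q \<inter> set S)"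
        using \<open>{S!(2*k), S!(2*k+1)} \<subseteq> cnbhd ?W ?F q \<inter> set S\<close> by (intro card_mono) auto
      then show ?thesis using \<open>card {S!(2*k), S!(2*k+1)} = 2\<close> by simp
    qed
  qed
  have tw: "\<forall>i < ?n. true_twins ?W ?F (S ! (2 * i)) (S ! (2 * i + 1))"
  proof (intro allI impI)
    fix i assume i: "i < ?n"
    have a: "2 * i < 2 * ?n" "2 * i + 1 < 2 * ?n" using i by auto
    show "true_twins ?W ?F (S ! (2 * i)) (S ! (2 * i + 1))"
      unfolding true_twins_def NF[OF SW[OF a(1)]] NF[OF SW[OF a(2)]]
      using Snth[OF a(1)] Snth[OF a(2)] by simp
  qed
  have "double_dom_seq ?W ?F S" unfolding double_dom_seq_def using dns dd by (rule conjI)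
  then show ?thesis using tw lenS by (intro conjI)
qed

theorem lemma3:
  fixes V :: "'a set" and E :: "'a \<Rightarrow> 'a \<Rightarrow> bool" and f :: "'a \<Rightarrow> nat"
  assumes "graph V E" and "V \<noteq> {}" and "\<forall>v \<in> V. f v \<ge> 1"
  shows "grundy_double_dom (Gf_verts V f) (Gf_adj E) \<le> 2 * grundy_dom V E
     \<and> (\<exists>S k. GDDS (Gf_verts V f) (Gf_adj E) S \<and> length S = 2 * k \<and>
          (\<forall>i < k. true_twins (Gf_verts V f) (Gf_adj E) (S ! (2 * i)) (S ! (2 * i + 1))))"
proof -
  let ?W = "Gf_verts V f" and ?F = "Gf_adj E"
  have fin: "finite V" using assms(1) by (simp add: graph_def)
  obtain D where D: "dominating_seq V E D" "length D = grundy_dom V E"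
    using grundy_attained[OF fin] by blast
  define S where "S = map (\<lambda>i. (D!(i div 2), i mod 2 + 1)) [0..<2 * length D]"
  have S: "double_dom_seq ?W ?F S" "length S = 2 * length D"
     "\<forall>i < length D. true_twins ?W ?F (S ! (2 * i)) (S ! (2 * i + 1))"
    using doubled[OF assms(1) assms(3) D(1)] unfolding S_def by auto
  have sub: "{length s | s. double_dom_seq ?W ?F s} \<subseteq> {..2 * grundy_dom V E}"
    using DDS_bound[OF assms(1)] by auto
  have eq: "grundy_double_dom ?W ?F = 2 * grundy_dom V E"
    unfolding grundy_double_dom_def
  proof (rule Max_eqI)
    show "finite {length s | s. double_dom_seq ?W ?F s}" using sub finite_subset by blast
    show "\<And>y. y \<in> {length s | s. double_dom_seq ?W ?F s} \<Longrightarrow> y \<le> 2 * grundy_dom V E"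
      using sub by auto
    show "2 * grundy_dom V E \<in> {length s | s. double_dom_seq ?W ?F s}"
      using S(1,2) D(2) by (metis (mono_tags, lifting) mem_Collect_eq)
  qed
  have "GDDS ?W ?F S" using S eq D(2) by (simp add: GDDS_def)
  moreover have "length S = 2 * length D" by (rule S(2))
  moreover note S(3)
  ultimately have "\<exists>S k. GDDS ?W ?F S \<and> length S = 2 * k \<and>
          (\<forall>i < k. true_twins ?W ?F (S ! (2 * i)) (S ! (2 * i + 1)))"
    by (intro exI[of _ S] exI[of _ "length D"] conjI)
  then show ?thesis using eq by simp
qed

end
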